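(* Consider the Byzantine setting and Byzantine-resilient algorithm of the context, with aggregation rules having contraction constant $\rho$ and virtual weight matrix $E$, and let $\Lambda^k\in\mathbb R^{H\times D}$ be the matrix with rows $(\lambda_i^k)^\top$, $i\in\mathcal H$. Assume $\kappa:=\|E-\frac1H\mathbf 1\mathbf 1^\top E\|^2<1$, $\rho<\frac{1-\kappa}{8\sqrt H}$, and set $\epsilon:=1-\kappa-8\rho\sqrt H$, assumed to lie in $(0,1)$. Assume moreover that for all $k\ge0$ the step sizes satisfy $$\frac{18(\gamma^k)^2}{\epsilon\,u_f^2J^2}\le\frac{(2-\epsilon)\epsilon^2}{3(3-\epsilon)}\qquad\text{and}\qquad1\le\frac{(\gamma^k)^2}{(\gamma^{k+1})^2}\le\frac{2}{1+(1-\epsilon^2)}.$$ Then for every $k\ge0$, $$\Big\|\Lambda^{k+1}-\tfrac1H\mathbf 1\mathbf 1^\top\Lambda^{k+1}\Big\|_F^2\le\frac{18(\gamma^{k+1})^2\delta^2H^3}{\epsilon^3J^2}.$$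
   Context: Byzantine setting. $J$ agents on an undirected connected graph with neighbor sets $\mathcal N_i$; honest agents $\mathcal H=\{1,\dots,H\}$, Byzantine agents $\mathcal B=\{H+1,\dots,J\}$, honest subgraph connected. For $i\in\mathcal H$: $f_i:\mathbb R^D\to\mathbb R$ is $u_f$-strongly convex and $L_f$-smooth, $C_i\subset\mathbb R^D$ nonempty compact convex; $s\in\mathbb R^D$. $g_i(\lambda)=\frac1H\max_{\theta\in C_i}\{-\lambda^\top\theta-f_i(\theta)\}+\frac1H\lambda^\top s$, $\nabla g_i(\lambda)=\frac1H s-\frac1H\arg\min_{\theta\in C_i}\{\lambda^\top\theta+f_i(\theta)\}$, $\delta^2:=\sup_{\lambda}\max_{i\in\mathcal H}\|\nabla g_i(\lambda)-\frac1H\sum_{j\in\mathcal H}\nabla g_j(\lambda)\|^2<\infty$. Contraction property: $\{AGG_i\}_{i\in\mathcal H}$ has contraction constant $\rho\ge0$ and virtual weight matrix $E=[e_{ij}]\in\mathbb R^{H\times H}$ if $e_{ij}\in(0,1]$ for $j\in(\mathcal N_i\cap\mathcal H)\cup\{i\}$, $e_{ij}=0$ otherwise, $\sum_je_{ij}=1$, and for every $i\in\mathcal H$, all honest inputs $\lambda_j$ and arbitrary Byzantine inputs ($\check\lambda_j=\lambda_j$ for honest $j$, arbitrary for Byzantine $j$), $\|AGG_i(\lambda_i,\{\check\lambda_j\}_{j\in\mathcal N_i})-\bar\lambda_i\|\le\rho\max_{j\in(\mathcal N_i\cap\mathcal H)\cup\{i\}}\|\lambda_j-\bar\lambda_i\|$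 with $\bar\lambda_i=\sum_{j}e_{ij}\lambda_j$. Algorithm: common initialization $\lambda_i^0=\lambda^0$ for $i\in\mathcal H$; $\theta_i^k=\arg\min_{\theta\in C_i}\{\theta^\top\lambda_i^k+f_i(\theta)\}$, $\lambda_i^{k+1/2}=\lambda_i^k-\gamma^k(\frac1Js-\frac1J\theta_i^k)$, $\lambda_i^{k+1}=AGG_i(\lambda_i^{k+1/2},\{\check\lambda_j^{k+1/2}\}_{j\in\mathcal N_i})$ with $\check\lambda_j^{k+1/2}$ arbitrary for Byzantine $j$. $\|\cdot\|$ is the spectral norm for matrices, $\|\cdot\|_F$ Frobenius, $\mathbf 1\in\mathbb R^H$ all-ones. *)

theory Defs
  imports "HOL-Analysis.Analysis"
begin

text \<open>Agents are indexed 0..<J; honest agents are 0..<H, Byzantine agents H..<J.\<close>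

definition strongly_convex_mod :: "real \<Rightarrow> ('v::real_inner \<Rightarrow> real) \<Rightarrow> bool" where
  "strongly_convex_mod u f \<longleftrightarrow>
     (\<forall>x y t. 0 \<le> t \<and> t \<le> 1 \<longrightarrow>
        f (t *\<^sub>R x + (1 - t) *\<^sub>R y) \<le> t * f x + (1 - t) * f y - u / 2 * t * (1 - t) * (norm (x - y))\<^sup>2)"

definition L_smooth :: "real \<Rightarrow> ('v::real_inner \<Rightarrow> real) \<Rightarrow> bool" where
  "L_smooth L f \<longleftrightarrow>
     (\<exists>g. (\<forall>x. (f has_derivative (\<lambda>h. inner (g x) h)) (at x)) \<and>
          (\<forall>x y. norm (g x - g y) \<le> L * norm (x - y)))"

definition connected_sub :: "nat set \<Rightarrow> (nat \<Rightarrow> nat set) \<Rightarrow> bool" where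
  "connected_sub S N \<longleftrightarrow>
     (\<forall>i\<in>S. \<forall>j\<in>S. (\<lambda>a b. a \<in> S \<and> b \<in> S \<and> b \<in> N a)\<^sup>*\<^sup>* i j)"

text \<open>Minimiser over C (unique under strong convexity and compactness).\<close>
definition argmin_on :: "'v set \<Rightarrow> ('v \<Rightarrow> real) \<Rightarrow> 'v" where
  "argmin_on C \<phi> = (THE x. x \<in> C \<and> (\<forall>y\<in>C. \<phi> x \<le> \<phi> y))"

definition grad_g :: "nat \<Rightarrow> 'v::real_inner \<Rightarrow> 'v set \<Rightarrow> ('v \<Rightarrow> real) \<Rightarrow> 'v \<Rightarrow> 'v" where
  "grad_g H s C f lam = (1 / real H) *\<^sub>R s - (1 / real H) *\<^sub>R argmin_on C (\<lambda>\<theta>. inner lam \<theta> + f \<theta>)"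

definition delta_sq_set :: "nat \<Rightarrow> 'v::real_inner \<Rightarrow> (nat \<Rightarrow> 'v set) \<Rightarrow> (nat \<Rightarrow> 'v \<Rightarrow> real) \<Rightarrow> real set" where
  "delta_sq_set H s C f = range (\<lambda>lam. Max ((\<lambda>i. (norm (grad_g H s (C i) (f i) lam
        - (1 / real H) *\<^sub>R (\<Sum>j<H. grad_g H s (C j) (f j) lam)))\<^sup>2) ` {..<H}))"

definition delta_sq :: "nat \<Rightarrow> 'v::real_inner \<Rightarrow> (nat \<Rightarrow> 'v set) \<Rightarrow> (nat \<Rightarrow> 'v \<Rightarrow> real) \<Rightarrow> real" where
  "delta_sq H s C f = Sup (delta_sq_set H s C f)"

definition spec_norm :: "nat \<Rightarrow> (nat \<Rightarrow> nat \<Rightarrow> real) \<Rightarrow> real" where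
  "spec_norm n M = Sup {sqrt (\<Sum>i<n. (\<Sum>j<n. M i j * x j)\<^sup>2) | x. (\<Sum>j<n. (x j)\<^sup>2) \<le> 1}"

definition frob_norm :: "nat \<Rightarrow> (nat \<Rightarrow> 'v::real_inner) \<Rightarrow> real" where
  "frob_norm n X = sqrt (\<Sum>i<n. (norm (X i))\<^sup>2)"

end

theory Submission
  imports Defs
begin



lemma frob_L2: "frob_norm n X = L2_set (\<lambda>i. norm (X i)) {..<n}"
  by (simp add: frob_norm_def L2_set_def)

lemma frob_cong: "(\<And>i. i < n \<Longrightarrow> X i = Y i) \<Longrightarrow> frob_norm n X = frob_norm n Y"
  unfolding frob_norm_def by (metis (no_types, lifting) lessThan_iff sum.cong)

lemma frob_nonneg: "0 \<le> frob_norm n X"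
  by (simp add: frob_norm_def sum_nonneg)

lemma frob_triangle: "frob_norm n (\<lambda>i. X i + Y i) \<le> frob_norm n X + frob_norm n Y"
proof -
  have "frob_norm n (\<lambda>i. X i + Y i) \<le> L2_set (\<lambda>i. norm (X i) + norm (Y i)) {..<n}"
    unfolding frob_L2 by (rule L2_set_mono) (auto simp: norm_triangle_ineq)
  also have "\<dots> \<le> frob_norm n X + frob_norm n Y"
    unfolding frob_L2 by (rule L2_set_triangle_ineq)
  finally show ?thesis .
qed

lemma frob_mono: "(\<And>i. i < n \<Longrightarrow> norm (X i) \<le> norm (Y i)) \<Longrightarrow> frob_norm n X \<le> frob_norm n Y"
  unfolding frob_L2 by (rule L2_set_mono) auto

lemma frob_scale: "frob_norm n (\<lambda>i. c *\<^sub>R X i) = \<bar>c\<bar> * frob_norm n X"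
proof -
  have "frob_norm n (\<lambda>i. c *\<^sub>R X i) = L2_set (\<lambda>i. \<bar>c\<bar> * norm (X i)) {..<n}"
    unfolding frob_L2 by simp
  also have "\<dots> = \<bar>c\<bar> * frob_norm n X"
    unfolding frob_L2 by (rule L2_set_right_distrib[symmetric]) simp
  finally show ?thesis .
qed

lemma frob_const_bound:
  assumes "\<And>i. i < n \<Longrightarrow> norm (X i) \<le> b"
  shows "frob_norm n X \<le> sqrt (real n) * b"
proof (cases "n = 0")
  case True then show ?thesis by (simp add: frob_norm_def)
next
  case False
  then have b: "0 \<le> b" using assms[of 0] norm_ge_zero order_trans by blast
  have "frob_norm n X \<le> L2_set (\<lambda>i. b) {..<n}"
    unfolding frob_L2 by (rule L2_set_mono) (auto simp: assms)
  also have "\<dots> = sqrt (real n) * b" by (simp add: L2_set_constant b)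
  finally show ?thesis .
qed

lemma norm_le_frob: "i < n \<Longrightarrow> norm (X i) \<le> frob_norm n X"
proof -
  assume i: "i < n"
  have "(norm (X i))\<^sup>2 \<le> (\<Sum>j<n. (norm (X j))\<^sup>2)"
    by (rule member_le_sum[of i "{..<n}" "\<lambda>j. (norm (X j))\<^sup>2", simplified]) (use i in auto)
  then show ?thesis unfolding frob_norm_def by (simp add: real_le_rsqrt)
qed

lemma frob_proj:
  fixes X :: "nat \<Rightarrow> 'v::real_inner"
  assumes n: "0 < n"
  shows "frob_norm n (\<lambda>i. X i - (1 / real n) *\<^sub>R (\<Sum>j<n. X j)) \<le> frob_norm n (\<lambda>i. X i - c)"
proof -
  define m where "m = (1 / real n) *\<^sub>R (\<Sum>j<n. X j)"
  have sm: "(\<Sum>j<n. X j) = real n *\<^sub>R m" using n by (simp add: m_def)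
  have "(\<Sum>i<n. (norm (X i - c))\<^sup>2) = (\<Sum>i<n. (norm (X i - m))\<^sup>2 + 2 * inner (X i - m) (m - c) + (norm (m - c))\<^sup>2)"
  proof (rule sum.cong)
    fix i
    have "X i - c = (X i - m) + (m - c)" by simp
    then show "(norm (X i - c))\<^sup>2 = (norm (X i - m))\<^sup>2 + 2 * inner (X i - m) (m - c) + (norm (m - c))\<^sup>2"
      by (metis power2_norm_eq_inner inner_add_left inner_add_right inner_commute mult_2 add.assoc)
  qed simp
  also have "\<dots> = (\<Sum>i<n. (norm (X i - m))\<^sup>2) + 2 * inner (\<Sum>i<n. X i - m) (m - c) + real n * (norm (m - c))\<^sup>2"
    by (simp add: sum.distrib inner_sum_left sum_distrib_left)
  also have "(\<Sum>i<n. X i - m) = 0" by (simp add: sum_subtractf sm sum_constant_scaleR)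
  finally have "(\<Sum>i<n. (norm (X i - m))\<^sup>2) \<le> (\<Sum>i<n. (norm (X i - c))\<^sup>2)" by simp
  then show ?thesis unfolding frob_norm_def m_def by simp
qed




lemma spec_bdd: fixes M :: "nat \<Rightarrow> nat \<Rightarrow> real" shows "bdd_above {sqrt (\<Sum>i<n. (\<Sum>j<n. M i j * x j)\<^sup>2) | x. (\<Sum>j<n. (x j)\<^sup>2) \<le> 1}"
proof (rule bdd_aboveI, clarify)
  fix x :: "nat \<Rightarrow> real" assume h: "(\<Sum>j<n. (x j)\<^sup>2) \<le> 1"
  have xj: "\<bar>x j\<bar> \<le> 1" if "j < n" for j
  proof -
    have "(x j)\<^sup>2 \<le> (\<Sum>j<n. (x j)\<^sup>2)"
      by (rule member_le_sum[of j "{..<n}" "\<lambda>j. (x j)\<^sup>2", simplified]) (use that in auto)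
    then have "(x j)\<^sup>2 \<le> 1\<^sup>2" using h by simp
    then show ?thesis using abs_le_square_iff by (metis abs_one)
  qed
  have "\<bar>\<Sum>j<n. M i j * x j\<bar> \<le> (\<Sum>j<n. \<bar>M i j\<bar>)" for i
  proof -
    have "\<bar>\<Sum>j<n. M i j * x j\<bar> \<le> (\<Sum>j<n. \<bar>M i j * x j\<bar>)" by (rule sum_abs)
    also have "\<dots> \<le> (\<Sum>j<n. \<bar>M i j\<bar>)"
      by (rule sum_mono) (auto simp: abs_mult intro: mult_left_le[OF xj])
    finally show ?thesis .
  qed
  note AB = this
  have "(\<Sum>j<n. M i j * x j)\<^sup>2 \<le> (\<Sum>j<n. \<bar>M i j\<bar>)\<^sup>2" for i
  proof -
    show ?thesis using AB[of i] by (metis power2_abs power_mono abs_ge_zero)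
  qed
  then have "(\<Sum>i<n. (\<Sum>j<n. M i j * x j)\<^sup>2) \<le> (\<Sum>i<n. (\<Sum>j<n. \<bar>M i j\<bar>)\<^sup>2)"
    by (intro sum_mono)
  then show "sqrt (\<Sum>i<n. (\<Sum>j<n. M i j * x j)\<^sup>2) \<le> sqrt (\<Sum>i<n. (\<Sum>j<n. \<bar>M i j\<bar>)\<^sup>2)"
    by simp
qed

lemma spec_nonneg: fixes M :: "nat \<Rightarrow> nat \<Rightarrow> real" shows "0 \<le> spec_norm n M"
proof -
  have "sqrt (\<Sum>i<n. (\<Sum>j<n. M i j * (\<lambda>_. 0) j)\<^sup>2) \<in> {sqrt (\<Sum>i<n. (\<Sum>j<n. M i j * x j)\<^sup>2) | x. (\<Sum>j<n. (x j)\<^sup>2) \<le> 1}"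
    by (intro CollectI exI[of _ "\<lambda>_. 0"]) simp
  from cSup_upper[OF this spec_bdd] show ?thesis by (simp add: spec_norm_def)
qed

lemma spec_scalar: fixes M :: "nat \<Rightarrow> nat \<Rightarrow> real" shows
  "(\<Sum>i<n. (\<Sum>j<n. M i j * x j)\<^sup>2) \<le> (spec_norm n M)\<^sup>2 * (\<Sum>j<n. (x j)\<^sup>2)"
proof (cases "(\<Sum>j<n. (x j)\<^sup>2) = 0")
  case True
  then have "\<forall>j\<in>{..<n}. (x j)\<^sup>2 = 0" by (subst sum_nonneg_eq_0_iff[symmetric]) auto
  then show ?thesis by simp
next
  case False
  define r where "r = sqrt (\<Sum>j<n. (x j)\<^sup>2)"
  have s0: "0 < (\<Sum>j<n. (x j)\<^sup>2)" using False by (simp add: sum_nonneg order_less_le)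
  then have r0: "0 < r" by (simp add: r_def)
  have r2: "r\<^sup>2 = (\<Sum>j<n. (x j)\<^sup>2)" using s0 by (simp add: r_def)
  define y where "y j = x j / r" for j
  have "(\<Sum>j<n. (y j)\<^sup>2) = (\<Sum>j<n. (x j)\<^sup>2) / r\<^sup>2"
    by (simp add: y_def power_divide sum_divide_distrib)
  also have "\<dots> = 1" using r2 s0 by simp
  finally have "sqrt (\<Sum>i<n. (\<Sum>j<n. M i j * y j)\<^sup>2) \<in> {sqrt (\<Sum>i<n. (\<Sum>j<n. M i j * x j)\<^sup>2) | x. (\<Sum>j<n. (x j)\<^sup>2) \<le> 1}"
    by auto
  from cSup_upper[OF this spec_bdd]
  have le: "sqrt (\<Sum>i<n. (\<Sum>j<n. M i j * y j)\<^sup>2) \<le> spec_norm n M" by (simp add: spec_norm_def)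
  have "(\<Sum>i<n. (\<Sum>j<n. M i j * y j)\<^sup>2) = (\<Sum>i<n. (\<Sum>j<n. M i j * x j)\<^sup>2) / r\<^sup>2"
    by (simp add: y_def sum_divide_distrib[symmetric] power_divide)
  then have "(\<Sum>i<n. (\<Sum>j<n. M i j * x j)\<^sup>2) / r\<^sup>2 \<le> (spec_norm n M)\<^sup>2"
  proof -
    have A: "0 \<le> (\<Sum>i<n. (\<Sum>j<n. M i j * y j)\<^sup>2)" by (meson sum_nonneg zero_le_power2)
    have "(sqrt (\<Sum>i<n. (\<Sum>j<n. M i j * y j)\<^sup>2))\<^sup>2 \<le> (spec_norm n M)\<^sup>2"
      by (rule power_mono[OF le]) (simp add: A)
    then show ?thesis using A \<open>(\<Sum>i<n. (\<Sum>j<n. M i j * y j)\<^sup>2) = _\<close> by simp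
  qed
  then show ?thesis using r0 r2 s0 by (simp add: divide_le_eq)
qed

lemma norm_sq_basis: "(norm (v::'v::euclidean_space))\<^sup>2 = (\<Sum>b\<in>Basis. (inner v b)\<^sup>2)"
  unfolding power2_norm_eq_inner by (subst euclidean_inner) (simp add: power2_eq_square)

lemma spec_vec:
  fixes W :: "nat \<Rightarrow> 'v::euclidean_space"
  shows "(frob_norm n (\<lambda>i. \<Sum>j<n. M i j *\<^sub>R W j))\<^sup>2 \<le> (spec_norm n M)\<^sup>2 * (frob_norm n W)\<^sup>2"
proof -
  have "(frob_norm n (\<lambda>i. \<Sum>j<n. M i j *\<^sub>R W j))\<^sup>2 = (\<Sum>i<n. (norm (\<Sum>j<n. M i j *\<^sub>R W j))\<^sup>2)"
    by (simp add: frob_norm_def sum_nonneg)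
  also have "\<dots> = (\<Sum>b\<in>Basis. \<Sum>i<n. (\<Sum>j<n. M i j * inner (W j) b)\<^sup>2)"
    by (simp add: norm_sq_basis inner_sum_left sum.swap[of _ "{..<n}" Basis])
  also have "\<dots> \<le> (\<Sum>b\<in>(Basis::'v set). (spec_norm n M)\<^sup>2 * (\<Sum>j<n. (inner (W j) b)\<^sup>2))"
    by (rule sum_mono) (rule spec_scalar)
  also have "\<dots> = (spec_norm n M)\<^sup>2 * (\<Sum>j<n. (norm (W j))\<^sup>2)"
    by (simp add: norm_sq_basis sum_distrib_left sum.swap[of _ "{..<n}" Basis])
  also have "\<dots> = (spec_norm n M)\<^sup>2 * (frob_norm n W)\<^sup>2"
    by (simp add: frob_norm_def sum_nonneg)
  finally show ?thesis .
qed




lemma lim_aux: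
  fixes c A :: real
  assumes c: "0 \<le> c" and h: "\<And>t. 0 < t \<Longrightarrow> t \<le> 1 \<Longrightarrow> c * (1 - t) \<le> A"
  shows "c \<le> A"
proof (rule ccontr)
  assume "\<not> c \<le> A"
  then have lt: "A < c" by simp
  define t where "t = (c - A) / (2 * c)"
  have cp: "0 < c" using lt c h[of 1] by simp
  have t0: "0 < t" using lt cp by (simp add: t_def)
  have "c - A \<le> 2 * c" using h[of 1] cp by simp
  then have t1: "t \<le> 1" using cp by (simp add: t_def divide_le_eq)
  have "c * (1 - t) = (c + A) / 2" using cp by (simp add: t_def field_simps)
  then show False using h[OF t0 t1] lt by simp
qed

lemma growth:
  fixes f :: "'v::real_inner \<Rightarrow> real"
  assumes sc: "strongly_convex_mod u f" and u: "0 < u" and cv: "convex C"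
    and x: "x \<in> C" and min: "\<forall>y\<in>C. inner lam x + f x \<le> inner lam y + f y"
    and y: "y \<in> C"
  shows "inner lam x + f x + u / 2 * (norm (y - x))\<^sup>2 \<le> inner lam y + f y"
proof -
  let ?p = "\<lambda>z. inner lam z + f z"
  have hh: "u / 2 * (norm (y - x))\<^sup>2 * (1 - t) \<le> ?p y - ?p x" if t: "0 < t" "t \<le> 1" for t
  proof -
    define z where "z = t *\<^sub>R y + (1 - t) *\<^sub>R x"
    have zC: "z \<in> C" unfolding z_def using convexD[OF cv y x, of t "1 - t"] t by simp
    have fz: "f z \<le> t * f y + (1 - t) * f x - u / 2 * t * (1 - t) * (norm (y - x))\<^sup>2"
      using sc[unfolded strongly_convex_mod_def, rule_format, of t y x] t by (simp add: z_def)
    have iz: "inner lam z = t * inner lam y + (1 - t) * inner lam x"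
      by (simp add: z_def inner_add_right)
    have "?p x \<le> ?p z" using min zC by auto
    then have "t * (u / 2 * (norm (y - x))\<^sup>2 * (1 - t)) \<le> t * (?p y - ?p x)"
      using fz iz by (simp add: algebra_simps)
    then show ?thesis using t by simp
  qed
  have "u / 2 * (norm (y - x))\<^sup>2 \<le> ?p y - ?p x"
    by (rule lim_aux[OF _ hh]) (use u in simp_all)
  then show ?thesis by simp
qed

lemma argmin_props:
  fixes f :: "'v::real_inner \<Rightarrow> real"
  assumes sc: "strongly_convex_mod u f" and u: "0 < u" and cont: "continuous_on C f"
    and cpt: "compact C" and ne: "C \<noteq> {}" and cv: "convex C"
  shows "argmin_on C (\<lambda>\<theta>. inner lam \<theta> + f \<theta>) \<in> C \<and>
         (\<forall>y\<in>C. inner lam (argmin_on C (\<lambda>\<theta>. inner lam \<theta> + f \<theta>)) + f (argmin_on C (\<lambda>\<theta>. inner lam \<theta> + f \<theta>))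
             \<le> inner lam y + f y)"
proof -
  let ?p = "\<lambda>z. inner lam z + f z"
  have "continuous_on C ?p"
    by (rule continuous_on_add[OF continuous_on_inner[OF continuous_on_const continuous_on_id] cont])
  from continuous_attains_inf[OF cpt ne this] obtain x where x: "x \<in> C" "\<forall>y\<in>C. ?p x \<le> ?p y" by blast
  have uniq: "z = x" if z: "z \<in> C" "\<forall>y\<in>C. ?p z \<le> ?p y" for z
  proof -
    have "?p x + u / 2 * (norm (z - x))\<^sup>2 \<le> ?p z" by (rule growth[OF sc u cv x z(1)])
    moreover have "?p z \<le> ?p x" using z(2) x(1) by blast
    ultimately have "u / 2 * (norm (z - x))\<^sup>2 \<le> 0" by simp
    then have "(norm (z - x))\<^sup>2 \<le> 0" using u by (simp add: mult_le_0_iff)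
    then show ?thesis by simp
  qed
  have "argmin_on C ?p = x"
    unfolding argmin_on_def
    by (rule the_equality) (use x uniq in blast)+
  then show ?thesis using x by simp
qed

lemma argmin_lip:
  fixes f :: "'v::real_inner \<Rightarrow> real"
  assumes sc: "strongly_convex_mod u f" and u: "0 < u" and cont: "continuous_on C f"
    and cpt: "compact C" and ne: "C \<noteq> {}" and cv: "convex C"
  shows "norm (argmin_on C (\<lambda>\<theta>. inner a \<theta> + f \<theta>) - argmin_on C (\<lambda>\<theta>. inner b \<theta> + f \<theta>)) \<le> norm (a - b) / u"
proof -
  define x where "x = argmin_on C (\<lambda>\<theta>. inner a \<theta> + f \<theta>)"
  define y where "y = argmin_on C (\<lambda>\<theta>. inner b \<theta> + f \<theta>)"
  note px = argmin_props[OF sc u cont cpt ne cv, of a, folded x_def]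
  note py = argmin_props[OF sc u cont cpt ne cv, of b, folded y_def]
  have g1: "inner a x + f x + u / 2 * (norm (y - x))\<^sup>2 \<le> inner a y + f y"
    using px py by (intro growth[OF sc u cv]) auto
  have g2: "inner b y + f y + u / 2 * (norm (x - y))\<^sup>2 \<le> inner b x + f x"
    using px py by (intro growth[OF sc u cv]) auto
  have nxy: "norm (y - x) = norm (x - y)" by (rule norm_minus_commute)
  have "u * (norm (x - y))\<^sup>2 \<le> inner (a - b) (y - x)"
    using g1 g2 nxy by (simp add: inner_diff_left inner_diff_right algebra_simps)
  also have "\<dots> \<le> norm (a - b) * norm (x - y)"
    using Cauchy_Schwarz_ineq2[of "a - b" "y - x"] nxy by simp
  finally have h: "u * (norm (x - y))\<^sup>2 \<le> norm (a - b) * norm (x - y)" .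
  show ?thesis
  proof (cases "norm (x - y) = 0")
    case True then show ?thesis using u by (simp add: x_def y_def)
  next
    case False
    then have "0 < norm (x - y)" by simp
    then have "u * norm (x - y) \<le> norm (a - b)" using h by (simp add: power2_eq_square)
    then show ?thesis using u by (simp add: x_def y_def field_simps)
  qed
qed




lemma scalar_final:
  fixes x y a q t e :: real
  assumes x0: "0 \<le> x" and y0: "0 \<le> y" and a0: "0 \<le> a" and q0: "0 \<le> q" and t0: "0 \<le> t"
    and e0: "0 < e" and e1: "e < 1"
    and yl: "y \<le> a * ((1 + q) * x + t)" and a2: "a\<^sup>2 \<le> 1 - e" and qe: "q \<le> e / 9"
    and xb: "x\<^sup>2 \<le> 18 * t\<^sup>2 / e ^ 3"
  shows "y\<^sup>2 \<le> 9 * (2 - e\<^sup>2) * t\<^sup>2 / e ^ 3"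
proof -
  define U where "U = (1 + q) * x"
  define K where "K = t\<^sup>2 / e ^ 3"
  have K0: "0 \<le> K" using e0 by (simp add: K_def)
  have U0: "0 \<le> U" using q0 x0 by (simp add: U_def)
  have tK: "t\<^sup>2 = e ^ 3 * K" using e0 by (simp add: K_def)
  have w0: "0 \<le> U + t" using U0 t0 by simp
  have "y\<^sup>2 \<le> (a * (U + t))\<^sup>2" using yl y0 unfolding U_def by (intro power_mono) auto
  also have "\<dots> = a\<^sup>2 * (U + t)\<^sup>2" by (simp add: power_mult_distrib)
  also have "\<dots> \<le> (1 - e) * (U + t)\<^sup>2" using a2 by (intro mult_right_mono) simp_all
  finally have y2: "y\<^sup>2 \<le> (1 - e) * (U + t)\<^sup>2" .
  have q2: "(1 + q)\<^sup>2 \<le> (1 + e / 9)\<^sup>2" using qe q0 by (intro power_mono) simp_all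
  have "U\<^sup>2 = (1 + q)\<^sup>2 * x\<^sup>2" by (simp add: U_def power_mult_distrib)
  also have "\<dots> \<le> (1 + e / 9)\<^sup>2 * (18 * K)" using q2 xb by (intro mult_mono) (simp_all add: K_def)
  finally have U2: "U\<^sup>2 \<le> (1 + e / 9)\<^sup>2 * (18 * K)" .
  have young: "2 * U * t \<le> e / 2 * U\<^sup>2 + 2 / e * t\<^sup>2"
  proof -
    have "0 \<le> (e * U - 2 * t)\<^sup>2" by simp
    then have "4 * e * U * t \<le> e\<^sup>2 * U\<^sup>2 + 4 * t\<^sup>2" by (simp add: power2_eq_square algebra_simps)
    then have "(2 * e) * (2 * U * t) \<le> (2 * e) * (e / 2 * U\<^sup>2 + 2 / e * t\<^sup>2)"
      using e0 by (simp add: algebra_simps power2_eq_square)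
    then show ?thesis using e0 by (simp add: mult_le_cancel_left_pos)
  qed
  have "(U + t)\<^sup>2 \<le> (1 + e / 2) * U\<^sup>2 + (1 + 2 / e) * t\<^sup>2"
    using young by (simp add: power2_eq_square algebra_simps)
  also have "\<dots> \<le> (1 + e / 2) * ((1 + e / 9)\<^sup>2 * (18 * K)) + (1 + 2 / e) * (e ^ 3 * K)"
    using U2 e0 tK by (intro add_mono mult_left_mono) simp_all
  also have "\<dots> = ((1 + e / 2) * (1 + e / 9)\<^sup>2 * 18 + e ^ 3 + 2 * e\<^sup>2) * K"
    using e0 by (simp add: field_simps power2_eq_square power3_eq_cube)
  finally have w2: "(U + t)\<^sup>2 \<le> ((1 + e / 2) * (1 + e / 9)\<^sup>2 * 18 + e ^ 3 + 2 * e\<^sup>2) * K" .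
  have P: "(1 - e) * ((1 + e / 2) * (1 + e / 9)\<^sup>2 * 18 + e ^ 3 + 2 * e\<^sup>2) \<le> 9 * (2 - e\<^sup>2)"
  proof -
    have "9 * (2 - e\<^sup>2) - (1 - e) * ((1 + e / 2) * (1 + e / 9)\<^sup>2 * 18 + e ^ 3 + 2 * e\<^sup>2)
          = 5 * e - 2 / 9 * e\<^sup>2 + 28 / 9 * e ^ 3 + 10 / 9 * e ^ 4"
      by (simp add: field_simps power2_eq_square power3_eq_cube power4_eq_xxxx)
    moreover have "e\<^sup>2 \<le> e" using e0 e1 by (simp add: power2_eq_square mult_le_cancel_left1 less_imp_le)
    moreover have "0 \<le> e ^ 3" "0 \<le> e ^ 4" using e0 by simp_all
    ultimately show ?thesis using e0 by linarith
  qed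
  have "y\<^sup>2 \<le> (1 - e) * (((1 + e / 2) * (1 + e / 9)\<^sup>2 * 18 + e ^ 3 + 2 * e\<^sup>2) * K)"
    using y2 w2 e1 by (meson mult_left_mono order_trans diff_ge_0_iff_ge less_imp_le)
  also have "\<dots> \<le> 9 * (2 - e\<^sup>2) * K"
    using P K0 by (simp add: mult.assoc[symmetric] mult_right_mono)
  also have "\<dots> = 9 * (2 - e\<^sup>2) * t\<^sup>2 / e ^ 3" by (simp add: K_def)
  finally show ?thesis .
qed




lemma aux81: "0 < (b::real) \<Longrightarrow> a * 81 \<le> e * b \<Longrightarrow> a / b \<le> e / 81"
  by (simp add: divide_le_eq)

lemma aux18: "18 * (x::real) \<le> y \<Longrightarrow> x \<le> y / 18" by simp

theorem lemma4:
  fixes J H :: nat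
    and N :: "nat \<Rightarrow> nat set"
    and f :: "nat \<Rightarrow> 'v::euclidean_space \<Rightarrow> real"
    and C :: "nat \<Rightarrow> 'v set"
    and s :: 'v
    and u_f L_f :: real
    and AGG :: "nat \<Rightarrow> 'v \<Rightarrow> (nat \<Rightarrow> 'v) \<Rightarrow> 'v"
    and \<rho> :: real
    and E :: "nat \<Rightarrow> nat \<Rightarrow> real"
    and \<gamma> :: "nat \<Rightarrow> real"
    and lam0 :: 'v
    and lam :: "nat \<Rightarrow> nat \<Rightarrow> 'v"
    and theta :: "nat \<Rightarrow> nat \<Rightarrow> 'v"
    and half :: "nat \<Rightarrow> nat \<Rightarrow> 'v"
    and byz :: "nat \<Rightarrow> nat \<Rightarrow> nat \<Rightarrow> 'v"
    and \<kappa> \<epsilon> :: real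
  assumes HJ: "0 < H" "H \<le> J"
    and N_sub: "\<And>i. i < J \<Longrightarrow> N i \<subseteq> {..<J}"
    and N_irrefl: "\<And>i. i < J \<Longrightarrow> i \<notin> N i"
    and N_sym: "\<And>i j. i < J \<Longrightarrow> j < J \<Longrightarrow> j \<in> N i \<longleftrightarrow> i \<in> N j"
    and G_conn: "connected_sub {..<J} N"
    and H_conn: "connected_sub {..<H} N"
    and u_pos: "0 < u_f"
    and f_sc: "\<And>i. i < H \<Longrightarrow> strongly_convex_mod u_f (f i)"
    and f_sm: "\<And>i. i < H \<Longrightarrow> L_smooth L_f (f i)"
    and C_ne: "\<And>i. i < H \<Longrightarrow> C i \<noteq> {}"
    and C_cpt: "\<And>i. i < H \<Longrightarrow> compact (C i)"
    and C_cvx: "\<And>i. i < H \<Longrightarrow> convex (C i)"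
    and delta_fin: "bdd_above (delta_sq_set H s C f)"
    and rho_nn: "0 \<le> \<rho>"
    and E_pos: "\<And>i j. i < H \<Longrightarrow> j < H \<Longrightarrow> j \<in> N i \<or> j = i \<Longrightarrow> 0 < E i j \<and> E i j \<le> 1"
    and E_zero: "\<And>i j. i < H \<Longrightarrow> j < H \<Longrightarrow> \<not> (j \<in> N i \<or> j = i) \<Longrightarrow> E i j = 0"
    and E_row: "\<And>i. i < H \<Longrightarrow> (\<Sum>j<H. E i j) = 1"
    and AGG_local: "\<And>i v x y. i < H \<Longrightarrow> (\<forall>j\<in>N i. x j = y j) \<Longrightarrow> AGG i v x = AGG i v y"
    and AGG_contr: "\<And>i l x. i < H \<Longrightarrow> (\<forall>j<H. x j = l j) \<Longrightarrow>
        norm (AGG i (l i) x - (\<Sum>j<H. E i j *\<^sub>R l j))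
          \<le> \<rho> * Max ((\<lambda>j. norm (l j - (\<Sum>m<H. E i m *\<^sub>R l m))) ` ({j. j < H \<and> j \<in> N i} \<union> {i}))"
    and kappa_def: "\<kappa> = (spec_norm H (\<lambda>i j. E i j - (1 / real H) * (\<Sum>l<H. E l j)))\<^sup>2"
    and kappa_lt: "\<kappa> < 1"
    and rho_lt: "\<rho> < (1 - \<kappa>) / (8 * sqrt (real H))"
    and eps_def: "\<epsilon> = 1 - \<kappa> - 8 * \<rho> * sqrt (real H)"
    and eps_pos: "0 < \<epsilon>" and eps_lt: "\<epsilon> < 1"
    and step1: "\<And>k. 18 * (\<gamma> k)\<^sup>2 / (\<epsilon> * u_f\<^sup>2 * (real J)\<^sup>2)
                   \<le> (2 - \<epsilon>) * \<epsilon>\<^sup>2 / (3 * (3 - \<epsilon>))"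
    and step2: "\<And>k. 1 \<le> (\<gamma> k)\<^sup>2 / (\<gamma> (Suc k))\<^sup>2"
    and step3: "\<And>k. (\<gamma> k)\<^sup>2 / (\<gamma> (Suc k))\<^sup>2 \<le> 2 / (1 + (1 - \<epsilon>\<^sup>2))"
    and init: "\<And>i. i < H \<Longrightarrow> lam 0 i = lam0"
    and theta_def: "\<And>k i. i < H \<Longrightarrow> theta k i = argmin_on (C i) (\<lambda>\<theta>. inner \<theta> (lam k i) + f i \<theta>)"
    and half_def: "\<And>k i. i < H \<Longrightarrow>
        half k i = lam k i - \<gamma> k *\<^sub>R ((1 / real J) *\<^sub>R s - (1 / real J) *\<^sub>R theta k i)"
    and lam_step: "\<And>k i. i < H \<Longrightarrow>
        lam (Suc k) i = AGG i (half k i) (\<lambda>j. if j < H then half k j else byz k i j)"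
  shows "(frob_norm H (\<lambda>i. lam (Suc k) i - (1 / real H) *\<^sub>R (\<Sum>j<H. lam (Suc k) j)))\<^sup>2
           \<le> 18 * (\<gamma> (Suc k))\<^sup>2 * delta_sq H s C f * (real H)^3 / (\<epsilon>^3 * (real J)\<^sup>2)"
proof -
  define avg :: "(nat \<Rightarrow> 'v) \<Rightarrow> 'v" where "avg X = (1 / real H) *\<^sub>R (\<Sum>j<H. X j)" for X
  define Fd where "Fd k = frob_norm H (\<lambda>i. lam k i - avg (lam k))" for k
  define D where "D = delta_sq H s C f"
  define th where "th i v = argmin_on (C i) (\<lambda>\<theta>. inner v \<theta> + f i \<theta>)" for i v
  define M where "M i j = E i j - (1 / real H) * (\<Sum>l<H. E l j)" for i j
  define S where "S = spec_norm H M"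
  define a where "a = S + 2 * \<rho> * sqrt (real H)"
  have Hpos: "0 < real H" using HJ by simp
  have Jpos: "0 < real J" using HJ by simp
  have cont: "continuous_on UNIV (f i)" if iH: "i < H" for i
  proof -
    obtain g where g: "\<And>x. (f i has_derivative (\<lambda>h. inner (g x) h)) (at x)"
      using f_sm[OF iH] unfolding L_smooth_def by blast
    show ?thesis by (rule continuous_at_imp_continuous_on) (use has_derivative_continuous[OF g] in blast)
  qed
  have contC: "continuous_on (C i) (f i)" if "i < H" for i
    using continuous_on_subset[OF cont[OF that]] by blast
  have D0: "0 \<le> D"
  proof -
    have "Max ((\<lambda>i. (norm (grad_g H s (C i) (f i) 0 - (1 / real H) *\<^sub>R (\<Sum>j<H. grad_g H s (C j) (f j) 0)))\<^sup>2) ` {..<H}) \<in> delta_sq_set H s C f"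
      unfolding delta_sq_set_def by blast
    from cSup_upper[OF this delta_fin] have "Max ((\<lambda>i. (norm (grad_g H s (C i) (f i) 0 - (1 / real H) *\<^sub>R (\<Sum>j<H. grad_g H s (C j) (f j) 0)))\<^sup>2) ` {..<H}) \<le> D"
      by (simp add: D_def delta_sq_def)
    moreover have "(norm (grad_g H s (C 0) (f 0) 0 - (1 / real H) *\<^sub>R (\<Sum>j<H. grad_g H s (C j) (f j) 0)))\<^sup>2 \<le> Max ((\<lambda>i. (norm (grad_g H s (C i) (f i) 0 - (1 / real H) *\<^sub>R (\<Sum>j<H. grad_g H s (C j) (f j) 0)))\<^sup>2) ` {..<H})"
      by (rule Max_ge) (use HJ in auto)
    ultimately show ?thesis by (meson order_trans zero_le_power2)
  qed
  have dev_th: "norm (th i v - avg (\<lambda>j. th j v)) \<le> real H * sqrt D" if i: "i < H" for i v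
  proof -
    let ?G = "\<lambda>i. grad_g H s (C i) (f i) v"
    have "Max ((\<lambda>i. (norm (?G i - (1 / real H) *\<^sub>R (\<Sum>j<H. ?G j)))\<^sup>2) ` {..<H}) \<in> delta_sq_set H s C f"
      unfolding delta_sq_set_def by blast
    from cSup_upper[OF this delta_fin] have "Max ((\<lambda>i. (norm (?G i - (1 / real H) *\<^sub>R (\<Sum>j<H. ?G j)))\<^sup>2) ` {..<H}) \<le> D"
      by (simp add: D_def delta_sq_def)
    moreover have "(norm (?G i - (1 / real H) *\<^sub>R (\<Sum>j<H. ?G j)))\<^sup>2 \<le> Max ((\<lambda>i. (norm (?G i - (1 / real H) *\<^sub>R (\<Sum>j<H. ?G j)))\<^sup>2) ` {..<H})"
      by (rule Max_ge) (use i in auto)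
    ultimately have le: "(norm (?G i - (1 / real H) *\<^sub>R (\<Sum>j<H. ?G j)))\<^sup>2 \<le> D" by linarith
    have eq: "?G i - (1 / real H) *\<^sub>R (\<Sum>j<H. ?G j) = - (1 / real H) *\<^sub>R (th i v - avg (\<lambda>j. th j v))"
    proof -
      have "(\<Sum>j<H. ?G j) = (\<Sum>j<H. (1 / real H) *\<^sub>R s) - (\<Sum>j<H. (1 / real H) *\<^sub>R th j v)"
        unfolding grad_g_def th_def by (rule sum_subtractf)
      also have "\<dots> = s - (1 / real H) *\<^sub>R (\<Sum>j<H. th j v)"
        using Hpos by (simp add: sum_constant_scaleR scaleR_sum_right)
      finally have sG: "(\<Sum>j<H. ?G j) = s - (1 / real H) *\<^sub>R (\<Sum>j<H. th j v)" .
      show ?thesis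
        by (subst sG) (simp add: grad_g_def th_def avg_def algebra_simps)
    qed
    have "(norm (th i v - avg (\<lambda>j. th j v)))\<^sup>2 = (real H)\<^sup>2 * (norm (?G i - (1 / real H) *\<^sub>R (\<Sum>j<H. ?G j)))\<^sup>2"
      using Hpos by (simp add: eq power_mult_distrib power_divide)
    also have "\<dots> \<le> (real H)\<^sup>2 * D" by (rule mult_left_mono[OF le]) simp
    also have "\<dots> = (real H * sqrt D)\<^sup>2" using D0 by (simp add: power_mult_distrib)
    finally show ?thesis using D0 by (simp add: power2_le_iff_abs_le)
  qed
  have lipth: "norm (th i x - th i y) \<le> norm (x - y) / u_f" if i: "i < H" for i x y
    unfolding th_def by (rule argmin_lip[OF f_sc[OF i] u_pos contC[OF i] C_cpt[OF i] C_ne[OF i] C_cvx[OF i]])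
  have theta_th: "theta k i = th i (lam k i)" if i: "i < H" for k i
    by (simp add: theta_def[OF i] th_def inner_commute)
  have E_nn: "0 \<le> E i j" if "i < H" "j < H" for i j
    using E_pos[OF that] E_zero[OF that] by (cases "j \<in> N i \<or> j = i") auto
  have S0: "0 \<le> S" unfolding S_def by (rule spec_nonneg)
  have kS: "\<kappa> = S\<^sup>2" unfolding kappa_def S_def M_def by simp
  have S1: "S < 1" using kS kappa_lt S0 by (metis abs_of_nonneg abs_square_less_1)
  have k0: "0 \<le> \<kappa>" using kS by simp
  have sH: "0 < sqrt (real H)" using Hpos by simp
  have r8: "\<rho> * sqrt (real H) < 1 / 8"
  proof -
    have "\<rho> * sqrt (real H) < (1 - \<kappa>) / (8 * sqrt (real H)) * sqrt (real H)"
      by (rule mult_strict_right_mono[OF rho_lt sH])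
    also have "\<dots> = (1 - \<kappa>) / 8" using sH by simp
    finally show ?thesis using k0 by simp
  qed
  have a0: "0 \<le> a" unfolding a_def using S0 rho_nn by simp
  have a2: "a\<^sup>2 \<le> 1 - \<epsilon>"
  proof -
    define r where "r = \<rho> * sqrt (real H)"
    have r0: "0 \<le> r" unfolding r_def using rho_nn by simp
    have "a\<^sup>2 = S\<^sup>2 + 4 * r * S + 4 * r\<^sup>2"
      unfolding a_def r_def by (simp add: power2_eq_square algebra_simps)
    also have "\<dots> \<le> \<kappa> + 8 * r"
    proof -
      have "r * S \<le> r * 1" using S1 r0 by (intro mult_left_mono) simp_all
      moreover have "r * r \<le> r * (1/8)" using r8 r0 unfolding r_def[symmetric] by (intro mult_left_mono) simp_all
      ultimately show ?thesis using kS r0 by (simp add: power2_eq_square)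
    qed
    finally show ?thesis using eps_def r_def by simp
  qed
  have step: "Fd (Suc k) \<le> a * (Fd k + \<bar>\<gamma> k\<bar> / real J * (Fd k / u_f + sqrt (real H) * (real H * sqrt D)))" for k
  proof -
    define h where "h = half k"
    define Z where "Z i = (\<Sum>j<H. E i j *\<^sub>R h j)" for i
    define mh where "mh = avg h"
    define ml where "ml = avg (lam k)"
    define cth where "cth = avg (\<lambda>j. th j ml)"
    define Fh where "Fh = frob_norm H (\<lambda>i. h i - mh)"
    have Fh0: "0 \<le> Fh" unfolding Fh_def by (rule frob_nonneg)
    have A1: "Fd (Suc k) \<le> frob_norm H (\<lambda>i. lam (Suc k) i - avg Z)"
      unfolding Fd_def avg_def by (rule frob_proj[OF HJ(1)])
    have A2: "frob_norm H (\<lambda>i. lam (Suc k) i - avg Z) \<le> frob_norm H (\<lambda>i. Z i - avg Z) + frob_norm H (\<lambda>i. lam (Suc k) i - Z i)"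
    proof -
      have "frob_norm H (\<lambda>i. lam (Suc k) i - avg Z) = frob_norm H (\<lambda>i. (Z i - avg Z) + (lam (Suc k) i - Z i))"
        by simp
      also have "\<dots> \<le> frob_norm H (\<lambda>i. Z i - avg Z) + frob_norm H (\<lambda>i. lam (Suc k) i - Z i)"
        by (rule frob_triangle)
      finally show ?thesis .
    qed
    have sumM: "(\<Sum>j<H. M i j) = 0" if i: "i < H" for i
    proof -
      have "(\<Sum>j<H. M i j) = (\<Sum>j<H. E i j) - (1 / real H) * (\<Sum>j<H. \<Sum>l<H. E l j)"
        by (simp add: M_def sum_subtractf sum_distrib_left)
      also have "(\<Sum>j<H. \<Sum>l<H. E l j) = (\<Sum>l<H. \<Sum>j<H. E l j)" by (rule sum.swap)
      also have "\<dots> = (\<Sum>l<H. 1)" by (rule sum.cong) (simp_all add: E_row)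
      finally show ?thesis using Hpos E_row[OF i] by simp
    qed
    have sumZ: "(\<Sum>l<H. Z l) = (\<Sum>j<H. (\<Sum>l<H. E l j) *\<^sub>R h j)"
    proof -
      have "(\<Sum>j<H. (\<Sum>l<H. E l j) *\<^sub>R h j) = (\<Sum>j<H. \<Sum>l<H. E l j *\<^sub>R h j)"
        by (simp add: scaleR_sum_left)
      also have "\<dots> = (\<Sum>l<H. \<Sum>j<H. E l j *\<^sub>R h j)" by (rule sum.swap)
      finally show ?thesis by (simp add: Z_def)
    qed
    have MZ: "(\<Sum>j<H. M i j *\<^sub>R (h j - mh)) = Z i - avg Z" if i: "i < H" for i
    proof -
      have "(\<Sum>j<H. M i j *\<^sub>R (h j - mh)) = (\<Sum>j<H. M i j *\<^sub>R h j) - (\<Sum>j<H. M i j) *\<^sub>R mh"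
        by (simp add: scaleR_diff_right sum_subtractf scaleR_sum_left)
      also have "\<dots> = (\<Sum>j<H. M i j *\<^sub>R h j)" by (simp add: sumM[OF i])
      also have "\<dots> = (\<Sum>j<H. E i j *\<^sub>R h j - ((1 / real H) * (\<Sum>l<H. E l j)) *\<^sub>R h j)"
        by (simp add: M_def scaleR_diff_left)
      also have "\<dots> = Z i - (1 / real H) *\<^sub>R (\<Sum>j<H. (\<Sum>l<H. E l j) *\<^sub>R h j)"
        by (simp add: sum_subtractf Z_def scaleR_sum_right)
      also have "\<dots> = Z i - avg Z" by (simp add: sumZ avg_def)
      finally show ?thesis .
    qed
    have B: "frob_norm H (\<lambda>i. Z i - avg Z) \<le> S * Fh"
    proof -
      have eq: "frob_norm H (\<lambda>i. Z i - avg Z) = frob_norm H (\<lambda>i. \<Sum>j<H. M i j *\<^sub>R (h j - mh))"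
        by (rule frob_cong) (simp add: MZ)
      have "(frob_norm H (\<lambda>i. Z i - avg Z))\<^sup>2 \<le> S\<^sup>2 * Fh\<^sup>2"
        unfolding eq S_def Fh_def by (rule spec_vec)
      also have "\<dots> = (S * Fh)\<^sup>2" by (simp add: power_mult_distrib)
      finally show ?thesis by (rule power2_le_imp_le) (simp add: S0 Fh0)
    qed
    have Zm: "norm (Z i - mh) \<le> Fh" if i: "i < H" for i
    proof -
      have "(\<Sum>j<H. E i j *\<^sub>R (h j - mh)) = Z i - (\<Sum>j<H. E i j) *\<^sub>R mh"
        by (simp add: Z_def scaleR_diff_right sum_subtractf scaleR_sum_left)
      then have eq: "Z i - mh = (\<Sum>j<H. E i j *\<^sub>R (h j - mh))" by (simp add: E_row[OF i])
      have "norm (Z i - mh) \<le> (\<Sum>j<H. norm (E i j *\<^sub>R (h j - mh)))"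
        unfolding eq by (rule norm_sum)
      also have "\<dots> \<le> (\<Sum>j<H. E i j * Fh)"
      proof (rule sum_mono)
        fix j assume "j \<in> {..<H}"
        then have j: "j < H" by simp
        have "norm (h j - mh) \<le> Fh" unfolding Fh_def by (rule norm_le_frob[OF j])
        then show "norm (E i j *\<^sub>R (h j - mh)) \<le> E i j * Fh"
          using E_nn[OF i j] by (simp add: mult_left_mono)
      qed
      also have "\<dots> = Fh" by (simp add: sum_distrib_right[symmetric] E_row[OF i])
      finally show ?thesis .
    qed
    have C1: "norm (lam (Suc k) i - Z i) \<le> \<rho> * (2 * Fh)" if i: "i < H" for i
    proof -
      define x where "x = (\<lambda>j. if j < H then h j else byz k i j)"
      have l: "lam (Suc k) i = AGG i (h i) x" unfolding x_def h_def by (rule lam_step[OF i])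
      have xh: "\<forall>j<H. x j = h j" by (simp add: x_def)
      define A where "A = {j. j < H \<and> j \<in> N i} \<union> {i}"
      have "norm (AGG i (h i) x - (\<Sum>j<H. E i j *\<^sub>R h j))
          \<le> \<rho> * Max ((\<lambda>j. norm (h j - (\<Sum>m<H. E i m *\<^sub>R h m))) ` A)"
        unfolding A_def by (rule AGG_contr[OF i xh])
      moreover have "Max ((\<lambda>j. norm (h j - (\<Sum>m<H. E i m *\<^sub>R h m))) ` A) \<le> 2 * Fh"
      proof -
        have fin: "finite ((\<lambda>j. norm (h j - (\<Sum>m<H. E i m *\<^sub>R h m))) ` A)" by (simp add: A_def)
        have ne: "(\<lambda>j. norm (h j - (\<Sum>m<H. E i m *\<^sub>R h m))) ` A \<noteq> {}" by (simp add: A_def)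
        have "norm (h j - Z i) \<le> 2 * Fh" if j: "j \<in> A" for j
        proof -
          have jH: "j < H" using j i by (auto simp: A_def)
          have "h j - Z i = (h j - mh) - (Z i - mh)" by simp
          then have "norm (h j - Z i) \<le> norm (h j - mh) + norm (Z i - mh)"
            by (metis norm_triangle_ineq4)
          moreover have "norm (h j - mh) \<le> Fh" unfolding Fh_def by (rule norm_le_frob[OF jH])
          ultimately show ?thesis using Zm[OF i] by simp
        qed
        then show ?thesis using Max_le_iff[OF fin ne] by (simp add: Z_def)
      qed
      ultimately have "norm (AGG i (h i) x - Z i) \<le> \<rho> * (2 * Fh)"
        using rho_nn unfolding Z_def by (meson mult_left_mono order_trans)
      then show ?thesis by (simp add: l)
    qed
    have C: "frob_norm H (\<lambda>i. lam (Suc k) i - Z i) \<le> sqrt (real H) * (\<rho> * (2 * Fh))"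
      by (rule frob_const_bound) (rule C1)
    have AF: "Fd (Suc k) \<le> a * Fh"
    proof -
      have "Fd (Suc k) \<le> S * Fh + sqrt (real H) * (\<rho> * (2 * Fh))" using A1 A2 B C by linarith
      also have "\<dots> = a * Fh" by (simp add: a_def algebra_simps)
      finally show ?thesis .
    qed
    define c' where "c' = ml - (\<gamma> k / real J) *\<^sub>R s + (\<gamma> k / real J) *\<^sub>R cth"
    have D1: "Fh \<le> frob_norm H (\<lambda>i. h i - c')"
      unfolding Fh_def mh_def avg_def by (rule frob_proj[OF HJ(1)])
    have hi: "h i - c' = (lam k i - ml) + (\<gamma> k / real J) *\<^sub>R (th i (lam k i) - cth)" if i: "i < H" for i
      by (simp add: h_def half_def[OF i] theta_th[OF i] c'_def algebra_simps)
    have D2: "frob_norm H (\<lambda>i. h i - c') \<le> Fd k + \<bar>\<gamma> k / real J\<bar> * frob_norm H (\<lambda>i. th i (lam k i) - cth)"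
    proof -
      have "frob_norm H (\<lambda>i. h i - c') = frob_norm H (\<lambda>i. (lam k i - ml) + (\<gamma> k / real J) *\<^sub>R (th i (lam k i) - cth))"
        by (rule frob_cong) (simp add: hi)
      also have "\<dots> \<le> frob_norm H (\<lambda>i. lam k i - ml) + frob_norm H (\<lambda>i. (\<gamma> k / real J) *\<^sub>R (th i (lam k i) - cth))"
        by (rule frob_triangle)
      also have "\<dots> = Fd k + \<bar>\<gamma> k / real J\<bar> * frob_norm H (\<lambda>i. th i (lam k i) - cth)"
        by (simp add: frob_scale Fd_def ml_def)
      finally show ?thesis .
    qed
    have D3: "frob_norm H (\<lambda>i. th i (lam k i) - cth) \<le> Fd k / u_f + sqrt (real H) * (real H * sqrt D)"
    proof -
      have "frob_norm H (\<lambda>i. th i (lam k i) - cth) = frob_norm H (\<lambda>i. (th i (lam k i) - th i ml) + (th i ml - cth))"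
        by simp
      also have "\<dots> \<le> frob_norm H (\<lambda>i. th i (lam k i) - th i ml) + frob_norm H (\<lambda>i. th i ml - cth)"
        by (rule frob_triangle)
      also have "frob_norm H (\<lambda>i. th i (lam k i) - th i ml) \<le> frob_norm H (\<lambda>i. (1 / u_f) *\<^sub>R (lam k i - ml))"
      proof (rule frob_mono)
        fix i assume i: "i < H"
        have "norm (th i (lam k i) - th i ml) \<le> norm (lam k i - ml) / u_f" by (rule lipth[OF i])
        then show "norm (th i (lam k i) - th i ml) \<le> norm ((1 / u_f) *\<^sub>R (lam k i - ml))"
          using u_pos by simp
      qed
      also have "frob_norm H (\<lambda>i. (1 / u_f) *\<^sub>R (lam k i - ml)) = Fd k / u_f"
        using u_pos by (simp add: frob_scale Fd_def ml_def)
      also have "frob_norm H (\<lambda>i. th i ml - cth) \<le> sqrt (real H) * (real H * sqrt D)"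
        by (rule frob_const_bound) (simp add: cth_def dev_th)
      finally show ?thesis by simp
    qed
    have "Fh \<le> Fd k + \<bar>\<gamma> k\<bar> / real J * (Fd k / u_f + sqrt (real H) * (real H * sqrt D))"
    proof -
      have "Fh \<le> Fd k + \<bar>\<gamma> k / real J\<bar> * frob_norm H (\<lambda>i. th i (lam k i) - cth)" using D1 D2 by linarith
      also have "\<dots> \<le> Fd k + \<bar>\<gamma> k / real J\<bar> * (Fd k / u_f + sqrt (real H) * (real H * sqrt D))"
        by (rule add_left_mono[OF mult_left_mono[OF D3]]) simp
      finally show ?thesis using Jpos by simp
    qed
    then have "a * Fh \<le> a * (Fd k + \<bar>\<gamma> k\<bar> / real J * (Fd k / u_f + sqrt (real H) * (real H * sqrt D)))"
      using a0 by (rule mult_left_mono)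
    then show ?thesis using AF by linarith
  qed
  have Fd0: "0 \<le> Fd k" for k unfolding Fd_def by (rule frob_nonneg)
  have bound: "(Fd k)\<^sup>2 \<le> 18 * (\<gamma> k)\<^sup>2 * D * (real H)^3 / (\<epsilon>^3 * (real J)\<^sup>2)" for k
  proof (induction k)
    case 0
    have "(\<Sum>j<H. lam 0 j) = (\<Sum>j<H. lam0)" by (rule sum.cong) (simp_all add: init)
    then have av: "avg (lam 0) = lam0" using Hpos by (simp add: avg_def sum_constant_scaleR)
    have "Fd 0 = frob_norm H (\<lambda>i. 0)" unfolding Fd_def frob_norm_def by (intro arg_cong[where f=sqrt] sum.cong) (simp_all add: init av)
    then have "Fd 0 = 0" by (simp add: frob_norm_def)
    moreover have "0 \<le> 18 * (\<gamma> 0)\<^sup>2 * D * (real H)^3 / (\<epsilon>^3 * (real J)\<^sup>2)"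
      using D0 eps_pos by simp
    ultimately show ?case by simp
  next
    case (Suc k)
    define g where "g = \<bar>\<gamma> k\<bar>"
    define t where "t = g / real J * (sqrt (real H) * (real H * sqrt D))"
    define q where "q = g / real J / u_f"
    have g0: "0 \<le> g" by (simp add: g_def)
    have q0: "0 \<le> q" using g0 Jpos u_pos by (simp add: q_def)
    have t0: "0 \<le> t" using g0 Jpos D0 by (simp add: t_def)
    have st: "Fd (Suc k) \<le> a * ((1 + q) * Fd k + t)"
      using step[of k] by (simp add: g_def[symmetric] t_def q_def algebra_simps)
    have t2: "t\<^sup>2 = (\<gamma> k)\<^sup>2 * D * (real H)^3 / (real J)\<^sup>2"
    proof -
      have "t\<^sup>2 = g\<^sup>2 / (real J)\<^sup>2 * (sqrt (real H))\<^sup>2 * (real H)\<^sup>2 * (sqrt D)\<^sup>2"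
        by (simp add: t_def power_mult_distrib power_divide)
      also have "\<dots> = (\<gamma> k)\<^sup>2 / (real J)\<^sup>2 * real H * (real H)\<^sup>2 * D"
        using D0 by (simp add: g_def)
      finally show ?thesis by (simp add: power2_eq_square power3_eq_cube)
    qed
    have xb: "(Fd k)\<^sup>2 \<le> 18 * t\<^sup>2 / \<epsilon> ^ 3"
      using Suc.IH by (simp add: t2 field_simps)
    have qe: "q \<le> \<epsilon> / 9"
    proof -
      have q2: "q\<^sup>2 = (\<gamma> k)\<^sup>2 / (\<epsilon> * u_f\<^sup>2 * (real J)\<^sup>2) * \<epsilon>"
        using eps_pos by (simp add: q_def g_def power_divide power_mult_distrib)
      have "18 * ((\<gamma> k)\<^sup>2 / (\<epsilon> * u_f\<^sup>2 * (real J)\<^sup>2)) \<le> (2 - \<epsilon>) * \<epsilon>\<^sup>2 / (3 * (3 - \<epsilon>))"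
        using step1[of k] by simp
      then have "(\<gamma> k)\<^sup>2 / (\<epsilon> * u_f\<^sup>2 * (real J)\<^sup>2) \<le> (2 - \<epsilon>) * \<epsilon>\<^sup>2 / (3 * (3 - \<epsilon>)) / 18"
        by (rule aux18)
      also have "\<dots> = (2 - \<epsilon>) * \<epsilon>\<^sup>2 / (54 * (3 - \<epsilon>))" by simp
      also have "\<dots> \<le> \<epsilon> / 81"
      proof -
        have "(2 - \<epsilon>) * \<epsilon>\<^sup>2 * 81 \<le> \<epsilon> * (54 * (3 - \<epsilon>))"
        proof -
          have "\<epsilon>\<^sup>2 \<le> \<epsilon>" using eps_pos eps_lt by (simp add: power2_eq_square mult_le_cancel_left1 less_imp_le)
          then have "(2 - \<epsilon>) * \<epsilon>\<^sup>2 \<le> (2 - \<epsilon>) * \<epsilon>" using eps_lt by (intro mult_left_mono) simp_all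
          moreover have "(2 - \<epsilon>) * \<epsilon> * 81 \<le> \<epsilon> * (54 * (3 - \<epsilon>))"
          proof -
            have "(2 - \<epsilon>) * \<epsilon> * 81 = \<epsilon> * (54 * (3 - \<epsilon>)) - 27 * \<epsilon>\<^sup>2"
              by (simp add: algebra_simps power2_eq_square)
            then show ?thesis by simp
          qed
          ultimately show ?thesis by linarith
        qed
        moreover have "0 < 54 * (3 - \<epsilon>)" using eps_lt by simp
        ultimately show ?thesis by (rule aux81[rotated])
      qed
      finally have "q\<^sup>2 \<le> \<epsilon> / 81 * \<epsilon>" unfolding q2 using eps_pos by (intro mult_right_mono) simp_all
      also have "\<dots> = (\<epsilon> / 9)\<^sup>2" by (simp add: power2_eq_square)
      finally have "q\<^sup>2 \<le> (\<epsilon> / 9)\<^sup>2" .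
      then show ?thesis by (rule power2_le_imp_le) (use eps_pos in simp)
    qed
    have y: "(Fd (Suc k))\<^sup>2 \<le> 9 * (2 - \<epsilon>\<^sup>2) * t\<^sup>2 / \<epsilon> ^ 3"
      by (rule scalar_final[OF Fd0 Fd0 a0 q0 t0 eps_pos eps_lt st a2 qe xb])
    have g1: "(2 - \<epsilon>\<^sup>2) * (\<gamma> k)\<^sup>2 \<le> 2 * (\<gamma> (Suc k))\<^sup>2"
    proof -
      have nz: "(\<gamma> (Suc k))\<^sup>2 \<noteq> 0" using step2[of k] by auto
      then have p: "0 < (\<gamma> (Suc k))\<^sup>2" by simp
      have e2: "0 < 2 - \<epsilon>\<^sup>2" using power_strict_mono[of \<epsilon> 1 2] eps_pos eps_lt by simp
      have "(\<gamma> k)\<^sup>2 / (\<gamma> (Suc k))\<^sup>2 \<le> 2 / (2 - \<epsilon>\<^sup>2)" using step3[of k] by simp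
      then have "(\<gamma> k)\<^sup>2 \<le> 2 / (2 - \<epsilon>\<^sup>2) * (\<gamma> (Suc k))\<^sup>2" using p by (simp add: divide_le_eq)
      then have "(2 - \<epsilon>\<^sup>2) * (\<gamma> k)\<^sup>2 \<le> (2 - \<epsilon>\<^sup>2) * (2 / (2 - \<epsilon>\<^sup>2) * (\<gamma> (Suc k))\<^sup>2)"
        using e2 by (intro mult_left_mono) simp_all
      also have "\<dots> = 2 * (\<gamma> (Suc k))\<^sup>2" using e2 by simp
      finally show ?thesis .
    qed
    have "9 * (2 - \<epsilon>\<^sup>2) * t\<^sup>2 = 9 * ((2 - \<epsilon>\<^sup>2) * (\<gamma> k)\<^sup>2) * (D * (real H)^3 / (real J)\<^sup>2)"
      by (simp add: t2)
    also have "\<dots> \<le> 9 * (2 * (\<gamma> (Suc k))\<^sup>2) * (D * (real H)^3 / (real J)\<^sup>2)"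
      using g1 D0 by (intro mult_right_mono mult_left_mono) simp_all
    finally have "9 * (2 - \<epsilon>\<^sup>2) * t\<^sup>2 / \<epsilon> ^ 3 \<le> 9 * (2 * (\<gamma> (Suc k))\<^sup>2) * (D * (real H)^3 / (real J)\<^sup>2) / \<epsilon> ^ 3"
      using eps_pos by (intro divide_right_mono) simp_all
    also have "\<dots> = 18 * (\<gamma> (Suc k))\<^sup>2 * D * (real H)^3 / (\<epsilon>^3 * (real J)\<^sup>2)"
      by (simp add: ac_simps)
    finally show ?case using y by linarith
  qed
  have "(frob_norm H (\<lambda>i. lam (Suc k) i - (1 / real H) *\<^sub>R (\<Sum>j<H. lam (Suc k) j)))\<^sup>2 = (Fd (Suc k))\<^sup>2"
    by (simp add: Fd_def avg_def)
  then show ?thesis using bound[of "Suc k"] by (simp add: D_def)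
qed


end
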